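(* Fix $\lambda>0$ and a positive integer $d$, let $\tilde x_\lambda(d)$ be the unique positive solution of $d\,x=1+\lambda/(1+x)^d$, and let $\nu_\lambda(d)=\xi(d)=\sup_{x\ge0}\Xi(d,x)$ where $\Xi(d,x)=\frac{dx}{1+x}\cdot\frac{f_{d,\lambda}(x)}{1+f_{d,\lambda}(x)}$ and $f_{d,\lambda}(x)=\lambda/(1+x)^d$. Then: (1) $\nu_\lambda(d)=\frac{d\tilde x_\lambda(d)-1}{1+\tilde x_\lambda(d)}$, and $\nu_\lambda(d)=\frac1d$ when $\lambda=\lambda_c(d)=\frac{d^d}{(d-1)^{d+1}}$ (for $d\ge2$). (2) $\nu_\lambda(d)$ is increasing in $d$ for fixed $\lambda>0$. (3) $\nu_\lambda(d)$ is increasing in $\lambda$ for fixed $d>0$.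
   Context: Here $\Xi(d,x)$ is the function $d\big(\Phi(f_{d,\lambda}(x))f_{d,\lambda}(x)/((1+x)\Phi(x))\big)^2$ for $\Phi(x)=\frac{1}{2\sqrt{x(1+x)}}$ (the derivative of $\sinh^{-1}\sqrt x$), which simplifies to the stated form. In items (2)–(3), $d$ is treated as a real parameter with the same formulas. *)

theory Defs
  imports "HOL-Analysis.Analysis"
begin

definition fdl :: "real \<Rightarrow> real \<Rightarrow> real \<Rightarrow> real" where
  "fdl d lam x = lam / (1 + x) powr d"

definition Xi :: "real \<Rightarrow> real \<Rightarrow> real \<Rightarrow> real" where
  "Xi lam d x = (d * x / (1 + x)) * (fdl d lam x / (1 + fdl d lam x))"

definition nu :: "real \<Rightarrow> real \<Rightarrow> real" where
  "nu lam d = (SUP x\<in>{0..}. Xi lam d x)"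

definition xtilde :: "real \<Rightarrow> real \<Rightarrow> real" where
  "xtilde lam d = (THE x. x > 0 \<and> d * x = 1 + lam / (1 + x) powr d)"

definition lambda_c :: "real \<Rightarrow> real" where
  "lambda_c d = d powr d / (d - 1) powr (d + 1)"

end

theory Submission
  imports Defs
begin



lemma g_strict:
  fixes d lam x y :: real
  assumes "d>0" "lam>0" "0 \<le> x" "x < y"
  shows "d*x - 1 - lam/(1+x) powr d < d*y - 1 - lam/(1+y) powr d"
proof -
  have "(1+x) powr d < (1+y) powr d" using powr_less_mono2[of d "1+x" "1+y"] assms by auto
  hence "lam/(1+y) powr d < lam/(1+x) powr d" using assms
    by (intro divide_strict_left_mono) auto
  moreover have "d*x < d*y" using assms by simp
  ultimately show ?thesis by simp
qed

lemma xt_exists: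
  fixes d lam :: real
  assumes "d>0" "lam>0"
  shows "\<exists>x. x > 0 \<and> d*x = 1 + lam/(1+x) powr d"
proof -
  let ?g = "\<lambda>x. d*x - 1 - lam/(1+x) powr d"
  define b where "b = (1+lam)/d"
  have b0: "b \<ge> 0" using assms unfolding b_def by (intro divide_nonneg_pos) auto
  have "(1+b) powr d \<ge> 1" using b0 assms by (intro ge_one_powr_ge_zero) auto
  hence "lam/(1+b) powr d \<le> lam" using assms
    by (simp add: divide_le_eq)
  hence gb: "?g b \<ge> 0" using assms by (simp add: b_def)
  have g0: "?g 0 \<le> 0" using assms by simp
  have "continuous_on {0..b} ?g"
    by (intro continuous_intros) auto
  then obtain x where x: "0 \<le> x" "x \<le> b" "?g x = 0"
    using IVT'[of ?g 0 0 b] g0 gb b0 by auto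
  have "x \<noteq> 0" using x assms by auto
  thus ?thesis using x by (intro exI[of _ x]) auto
qed

lemma xt_uniq:
  fixes d lam :: real
  assumes "d>0" "lam>0" "x>0" "d*x = 1 + lam/(1+x) powr d" "y>0" "d*y = 1 + lam/(1+y) powr d"
  shows "x = y"
proof (rule ccontr)
  assume "x \<noteq> y"
  hence "x < y \<or> y < x" by linarith
  thus False using g_strict[of d lam x y] g_strict[of d lam y x] assms by auto
qed

lemma xt_prop:
  fixes d lam :: real
  assumes "d>0" "lam>0"
  shows "xtilde lam d > 0 \<and> d * xtilde lam d = 1 + lam/(1 + xtilde lam d) powr d"
  unfolding xtilde_def
proof (rule theI')
  show "\<exists>!x. 0 < x \<and> d * x = 1 + lam / (1 + x) powr d"
    using xt_exists[OF assms] xt_uniq[OF assms] by blast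
qed

lemma xt_eq:
  fixes d lam :: real
  assumes "d>0" "lam>0" "x>0" "d*x = 1 + lam/(1+x) powr d"
  shows "xtilde lam d = x"
  using xt_uniq[OF assms(1,2)] xt_prop[OF assms(1,2)] assms(3,4) by blast



lemma alg0:
  fixes d F z :: real
  assumes "F>0" "z>0"
  shows "1/z - 1/(1+z) - d/(1+z) + F*(d/(1+z))/(1+F) = (1 + F - d*z) / (z*(1+z)*(1 + F))"
proof -
  have h: "1+F \<noteq> 0" "1+z \<noteq> 0" "z \<noteq> 0" using assms by auto
  have 1: "1/z - 1/(1+z) = 1/(z*(1+z))" using h by (simp add: field_simps)
  have 20: "F/(1+F) - 1 = -1/(1+F)" using h by (simp add: field_simps)
  have "- d/(1+z) + F*(d/(1+z))/(1+F) = (d/(1+z)) * (F/(1+F) - 1)" by (simp add: algebra_simps)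
  also have "\<dots> = - d/((1+z)*(1+F))" unfolding 20 by simp
  finally have 2: "- d/(1+z) + F*(d/(1+z))/(1+F) = - d/((1+z)*(1+F))" .
  have 31: "(1+F)/(z*(1+z)*(1 + F)) = 1/(z*(1+z))" using h by simp
  have 32: "(d*z)/(z*(1+z)*(1 + F)) = d/((1+z)*(1+F))" using h by simp
  have 3: "1/(z*(1+z)) - d/((1+z)*(1+F)) = (1 + F - d*z) / (z*(1+z)*(1 + F))"
    unfolding diff_divide_distrib 31 32 ..
  show ?thesis using 1 2 3 by (simp add: algebra_simps)
qed

lemma alg1:
  fixes d lam z E :: real
  assumes "lam>0" "z>0" "E>0"
  shows "1/z - 1/(1+z) - d*(1/(1+z)) - (-(lam * (E * (d * (1/(1+z))))) / E^2) / (1 + lam / E)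
     = (1 + lam / E - d*z) / (z*(1+z)*(1 + lam / E))"
proof -
  have "(lam * (E * (d * (1/(1+z))))) / E^2 = (lam/E) * (d/(1+z))"
    using assms by (simp add: power2_eq_square)
  hence "1/z - 1/(1+z) - d*(1/(1+z)) - (-(lam * (E * (d * (1/(1+z))))) / E^2) / (1 + lam / E)
      = 1/z - 1/(1+z) - d/(1+z) + (lam/E)*(d/(1+z))/(1+lam/E)" by simp
  also have "\<dots> = (1 + lam / E - d*z) / (z*(1+z)*(1 + lam / E))"
    using assms by (intro alg0) auto
  finally show ?thesis .
qed

lemma L_deriv:
  fixes d lam z :: real
  assumes "d>0" "lam>0" "z>0"
  shows "((\<lambda>z. ln z - ln(1+z) - d*ln(1+z) - ln(1 + lam / exp(d*ln(1+z)))) has_real_derivative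
     (1 + lam / exp(d*ln(1+z)) - d*z) / (z*(1+z)*(1 + lam / exp(d*ln(1+z))))) (at z)"
  apply (rule DERIV_cong)
   apply (intro derivative_eq_intros)
  using assms apply simp_all
  subgoal by (intro add_pos_pos divide_pos_pos) auto
  subgoal using alg1[of lam z "exp(d*ln(1+z))" d] by (simp add: power2_eq_square)
  done


definition LL :: "real \<Rightarrow> real \<Rightarrow> real \<Rightarrow> real" where
  "LL lam d z = ln z - ln(1+z) - d*ln(1+z) - ln(1 + lam / exp(d*ln(1+z)))"

lemma powr_exp: "(z::real) > 0 \<Longrightarrow> (1+z) powr d = exp(d*ln(1+z))"
  by (simp add: powr_def mult.commute)

lemma Xi_exp:
  fixes d lam z :: real
  assumes "d>0" "lam>0" "z>0"
  shows "Xi lam d z = d*lam*exp(LL lam d z)"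
proof -
  define E where "E = exp(d*ln(1+z))"
  have E: "E>0" by (simp add: E_def)
  have F: "1 + lam/E > 0" using E assms by (intro add_pos_pos divide_pos_pos) auto
  have "exp(LL lam d z) = z/(1+z)/E/(1+lam/E)"
    unfolding LL_def E_def[symmetric] using assms F
    by (simp add: exp_diff E_def)
  moreover have "Xi lam d z = d*z/(1+z) * ((lam/E)/(1+lam/E))"
    unfolding Xi_def fdl_def using powr_exp[OF assms(3), of d] E_def by simp
  ultimately show ?thesis by (simp add: ac_simps)
qed

lemma Xi_nonneg:
  fixes d lam z :: real
  assumes "d>0" "lam>0" "z\<ge>0"
  shows "Xi lam d z \<ge> 0"
  unfolding Xi_def fdl_def using assms by (simp add: add_pos_pos)

lemma LL_deriv:
  fixes d lam z :: real
  assumes "d>0" "lam>0" "z>0"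
  shows "(LL lam d has_real_derivative
     (1 + lam / (1+z) powr d - d*z) / (z*(1+z)*(1 + lam / (1+z) powr d))) (at z)"
  unfolding LL_def powr_exp[OF assms(3)] by (rule L_deriv[OF assms])

lemma LL_cont:
  fixes d lam a b :: real
  assumes "d>0" "lam>0" "a>0"
  shows "continuous_on {a..b} (LL lam d)"
proof (intro continuous_at_imp_continuous_on ballI)
  fix x assume "x \<in> {a..b}" hence "x>0" using assms by auto
  thus "isCont (LL lam d) x" by (rule DERIV_isCont[OF LL_deriv[OF assms(1,2)]])
qed

lemma Xi_le:
  fixes d lam x :: real
  assumes "d>0" "lam>0" "x\<ge>0"
  shows "Xi lam d x \<le> Xi lam d (xtilde lam d)"
proof -
  define t where "t = xtilde lam d"
  have t: "t > 0" "d*t = 1 + lam/(1+t) powr d" using xt_prop[OF assms(1,2)] t_def by auto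
  show ?thesis
  proof (cases "x = 0")
    case True
    then show ?thesis using Xi_nonneg[of d lam t] t assms unfolding t_def[symmetric]
      by (simp add: Xi_def)
  next
    case False
    hence x: "x > 0" using assms by simp
    have "LL lam d x \<le> LL lam d t"
    proof (cases "x \<le> t")
      case True
      show ?thesis
      proof (rule DERIV_nonneg_imp_increasing_open[OF True _ LL_cont[OF assms(1,2) x]])
        fix y assume y: "x < y" "y < t"
        have "d*y - 1 - lam/(1+y) powr d < d*t - 1 - lam/(1+t) powr d"
          using y x by (intro g_strict assms) auto
        hence num: "1 + lam / (1+y) powr d - d*y > 0" using t by simp
        have "1 + lam / (1+y) powr d > 0" using assms y x by (intro add_pos_pos divide_pos_pos) auto
        hence "(1 + lam / (1+y) powr d - d*y) / (y*(1+y)*(1 + lam / (1+y) powr d)) \<ge> 0"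
          using num y x by (intro divide_nonneg_pos) auto
        thus "\<exists>D. (LL lam d has_real_derivative D) (at y) \<and> D \<ge> 0"
          using LL_deriv[OF assms(1,2), of y] y x by auto
      qed
    next
      case False
      hence tx: "t \<le> x" by simp
      show ?thesis
      proof (rule DERIV_nonpos_imp_decreasing_open[OF tx _ LL_cont[OF assms(1,2) t(1)]])
        fix y assume y: "t < y" "y < x"
        have "d*t - 1 - lam/(1+t) powr d < d*y - 1 - lam/(1+y) powr d"
          using y t by (intro g_strict assms) auto
        hence num: "1 + lam / (1+y) powr d - d*y < 0" using t by simp
        have "1 + lam / (1+y) powr d > 0" using assms y t by (intro add_pos_pos divide_pos_pos) auto
        hence "(1 + lam / (1+y) powr d - d*y) / (y*(1+y)*(1 + lam / (1+y) powr d)) \<le> 0"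
          using num y t by (intro divide_nonpos_pos) auto
        thus "\<exists>D. (LL lam d has_real_derivative D) (at y) \<and> D \<le> 0"
          using LL_deriv[OF assms(1,2), of y] y t by auto
      qed
    qed
    thus ?thesis using Xi_exp[OF assms(1,2) x] Xi_exp[OF assms(1,2) t(1)] assms
      unfolding t_def[symmetric] by simp
  qed
qed

lemma nu_eq:
  fixes d lam :: real
  assumes "d>0" "lam>0"
  shows "nu lam d = Xi lam d (xtilde lam d)"
  unfolding nu_def
  using xt_prop[OF assms] Xi_le[OF assms]
  by (intro cSup_eq_maximum) auto

lemma nu_formula:
  fixes d lam :: real
  assumes "d>0" "lam>0"
  shows "nu lam d = (d * xtilde lam d - 1) / (1 + xtilde lam d)"
proof -
  define t where "t = xtilde lam d"
  have t: "t > 0" "d*t = 1 + lam/(1+t) powr d" using xt_prop[OF assms] t_def by auto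
  have f: "fdl d lam t = d*t - 1" unfolding fdl_def using t by simp
  have "Xi lam d t = (d*t/(1+t)) * ((d*t - 1)/(d*t))"
    unfolding Xi_def f by simp
  also have "\<dots> = (d*t*(d*t - 1))/((d*t)*(1+t))" by (simp add: times_divide_times_eq mult.commute)
  also have "\<dots> = (d*t - 1)/(1+t)" using t assms by (intro mult_divide_mult_cancel_left) auto
  finally show ?thesis using nu_eq[OF assms] t_def by simp
qed



lemma amgm_strict:
  fixes v a :: real
  assumes "0<v" "v<1" "0<a" "a<1"
  shows "v powr a - a * v < 1 - a"
proof -
  have "(\<lambda>w. w powr a - a*w) v < (\<lambda>w. w powr a - a*w) 1"
  proof (rule DERIV_pos_imp_increasing_open[OF assms(2)])
    fix w assume w: "v < w" "w < 1"
    hence w0: "w > 0" using assms by simp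
    have "w powr (1-a) < 1" using powr01_less_one[of w "1-a"] w w0 assms by simp
    moreover have "w powr (a-1) * w powr (1-a) = 1" using w0 by (simp flip: powr_add)
    moreover have "w powr (1-a) > 0" using w0 by simp
    ultimately have "w powr (a-1) > 1"
    proof -
      assume p1: "w powr (1-a) < 1" and eq: "w powr (a-1) * w powr (1-a) = 1" and p0: "w powr (1-a) > 0"
      show ?thesis
      proof (rule ccontr)
        assume "\<not> w powr (a-1) > 1"
        hence "w powr (a-1) * w powr (1-a) \<le> 1 * w powr (1-a)"
          using p0 by (intro mult_right_mono) auto
        thus False using eq p1 by simp
      qed
    qed
    hence "a * w powr (a-1) - a > 0" using assms by (simp add: algebra_simps)
    moreover have "((\<lambda>w. w powr a - a*w) has_real_derivative a * w powr (a-1) - a) (at w)"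
      using w0 by (auto intro!: derivative_eq_intros has_real_derivative_powr)
    ultimately show "\<exists>y. ((\<lambda>w. w powr a - a*w) has_real_derivative y) (at w) \<and> 0 < y" by blast
  next
    show "continuous_on {v..1} (\<lambda>w. w powr a - a*w)"
      using assms by (intro continuous_intros) auto
  qed
  thus ?thesis by simp
qed



lemma frac_mono:
  fixes f1 f2 :: real
  assumes "0 < f1" "f1 < f2"
  shows "f1/(1+f1) < f2/(1+f2)"
proof -
  have "f1*(1+f2) < f2*(1+f1)" using assms by (simp add: algebra_simps)
  thus ?thesis using assms by (simp add: divide_less_eq less_divide_eq add_pos_pos mult.commute)
qed

lemma nu_mono_lam:
  fixes d :: real
  assumes "d>0"
  shows "strict_mono_on {0<..} (\<lambda>lam. nu lam d)"
proof (rule strict_mono_onI)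
  fix l1 l2 :: real assume l: "l1 \<in> {0<..}" "l2 \<in> {0<..}" "l1 < l2"
  hence l0: "l1 > 0" "l2 > 0" by auto
  define x where "x = xtilde l1 d"
  have x: "x > 0" using xt_prop[OF assms l0(1)] x_def by auto
  have A: "d*x/(1+x) > 0" using x assms by simp
  have "fdl d l1 x < fdl d l2 x" "fdl d l1 x > 0"
    unfolding fdl_def using l0 l x by (auto intro!: divide_strict_right_mono)
  hence "fdl d l1 x/(1+fdl d l1 x) < fdl d l2 x/(1+fdl d l2 x)" by (intro frac_mono)
  hence "Xi l1 d x < Xi l2 d x" unfolding Xi_def by (rule mult_strict_left_mono[OF _ A])
  also have "\<dots> \<le> Xi l2 d (xtilde l2 d)" using Xi_le[OF assms l0(2)] x by simp
  finally show "nu l1 d < nu l2 d" using nu_eq[OF assms l0(1)] nu_eq[OF assms l0(2)] x_def by simp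
qed

lemma nu_mono_d:
  fixes lam :: real
  assumes "lam>0"
  shows "strict_mono_on {0<..} (\<lambda>d. nu lam d)"
proof (rule strict_mono_onI)
  fix d1 d2 :: real assume dd: "d1 \<in> {0<..}" "d2 \<in> {0<..}" "d1 < d2"
  hence d0: "d1 > 0" "d2 > 0" by auto
  define x where "x = xtilde lam d1"
  have x: "x > 0" using xt_prop[OF d0(1) assms] x_def by auto
  define u where "u = 1 + x"
  have u: "u > 1" using x u_def by simp
  define a where "a = d1/d2"
  have a: "0 < a" "a < 1" using d0 dd a_def by auto
  define y where "y = u powr a - 1"
  have y: "y > 0" using gr_one_powr[OF u a(1)] y_def by simp
  have "(1+y) powr d2 = u powr d1" unfolding y_def using d0 a_def by (simp add: powr_powr)
  hence f: "fdl d2 lam y = fdl d1 lam x" unfolding fdl_def u_def by simp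
  have fpos: "fdl d1 lam x / (1 + fdl d1 lam x) > 0"
    unfolding fdl_def using x assms by (intro divide_pos_pos add_pos_pos) auto
  define v where "v = 1/u"
  have v: "0 < v" "v < 1" using u v_def by auto
  have vpa: "v powr a = 1 / u powr a" unfolding v_def using u by (simp add: powr_divide)
  have key: "v powr a - a * v < 1 - a" by (rule amgm_strict[OF v a])
  have "1 - v = x/(1+x)" unfolding v_def u_def using x by (simp add: field_simps)
  hence e1: "d1*x/(1+x) = d2 * (a * (1 - v))"
    unfolding a_def using d0 by simp
  have e2: "d2*y/(1+y) = d2 * (1 - v powr a)"
    unfolding vpa y_def using u by (simp add: field_simps)
  have "d1*x/(1+x) < d2*y/(1+y)" unfolding e1 e2 using key d0
    by (intro mult_strict_left_mono) (auto simp: algebra_simps)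
  hence "Xi lam d1 x < Xi lam d2 y" unfolding Xi_def f using fpos by (intro mult_strict_right_mono)
  also have "\<dots> \<le> Xi lam d2 (xtilde lam d2)" using Xi_le[OF d0(2) assms] y by simp
  finally show "nu lam d1 < nu lam d2" using nu_eq[OF d0(1) assms] nu_eq[OF d0(2) assms] x_def by simp
qed

lemma nu_crit:
  fixes n :: nat
  assumes "n \<ge> 2"
  shows "nu (lambda_c (real n)) (real n) = 1 / real n"
proof -
  define d where "d = real n"
  have d: "d \<ge> 2" using assms d_def by simp
  have d1: "d - 1 > 0" using d by simp
  have lc: "lambda_c d = d powr d / ((d-1) powr d * (d-1))"
    unfolding lambda_c_def using d1 by (simp add: powr_add)
  have lcpos: "lambda_c d > 0" unfolding lc using d1 d by simp
  define t where "t = 1/(d-1)"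
  have t: "t > 0" using d1 t_def by simp
  have tt: "1 + t = d/(d-1)" unfolding t_def using d1 by (simp add: field_simps)
  have pw: "(1+t) powr d = d powr d / (d-1) powr d" unfolding tt using d1 d by (simp add: powr_divide)
  have P: "d powr d > 0" "(d-1) powr d > 0" using d1 d by auto
  have lt: "lambda_c d / (1+t) powr d = 1/(d-1)" unfolding lc pw using d1 P by (simp add: field_simps)
  have "d*t = 1 + 1/(d-1)" unfolding t_def using d1 by (simp add: field_simps)
  hence "d*t = 1 + lambda_c d / (1+t) powr d" using lt by simp
  hence xt: "xtilde (lambda_c d) d = t" using d t lcpos by (intro xt_eq) auto
  have "nu (lambda_c d) d = (d*t - 1)/(1+t)" using nu_formula[of d "lambda_c d"] xt d lcpos by simp
  also have "\<dots> = 1/d" unfolding tt t_def using d1 by (simp add: field_simps)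
  finally show ?thesis unfolding d_def .
qed

theorem lemma4p3:
  shows "(\<forall>lam>0. \<forall>n::nat. n \<ge> 1 \<longrightarrow>
            nu lam (real n) = (real n * xtilde lam (real n) - 1) / (1 + xtilde lam (real n)))
       \<and> (\<forall>n::nat. n \<ge> 2 \<longrightarrow> nu (lambda_c (real n)) (real n) = 1 / real n)
       \<and> (\<forall>lam>0. strict_mono_on {0<..} (\<lambda>d. nu lam d))
       \<and> (\<forall>d>0. strict_mono_on {0<..} (\<lambda>lam. nu lam d))"
  using nu_formula nu_crit nu_mono_d nu_mono_lam by auto

end
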